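(* Let $A\in\mathbb{R}^{m\times m}$ be positive definite, let $B\in\mathbb{R}^{m\times n}$ ($n\le m$) be rank deficient, and let $\alpha\ge0$, $\beta>0$. Then $\operatorname{index}(I-\mathcal{T}(\alpha,\beta))=1$, i.e. $\operatorname{rank}(I-\mathcal{T}(\alpha,\beta))=\operatorname{rank}\big((I-\mathcal{T}(\alpha,\beta))^2\big)$.
   Context: A real square matrix $A$ is called positive definite if $x^TAx>0$ for all nonzero $x\in\mathbb{R}^m$ ($A$ need not be symmetric). For $\alpha\ge0,\beta>0$ define $\mathcal{P}_{MGSSP}=\begin{pmatrix}\alpha I+2A & 2B\\ -2B^T & \beta I\end{pmatrix}$, $\mathcal{Q}_{MGSSP}=\begin{pmatrix}\alpha I+A & B\\ -B^T & \beta I\end{pmatrix}$, and the MGSSP iteration matrix $\mathcal{T}(\alpha,\beta)=\mathcal{P}_{MGSSP}^{-1}\mathcal{Q}_{MGSSP}$ ($\mathcal{P}_{MGSSP}$ is nonsingular). The index of a square matrix $M$ is the smallest $k\ge0$ with $\operatorname{rank}(M^{k})=\operatorname{rank}(M^{k+1})$. *)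

theory Defs
  imports "HOL-Analysis.Analysis"
begin

definition pos_def_mat :: "real^'m^'m \<Rightarrow> bool" where
  "pos_def_mat A \<longleftrightarrow> (\<forall>x::real^'m. x \<noteq> 0 \<longrightarrow> x \<bullet> (A *v x) > 0)"

definition block_mat ::
  "real^'m^'m \<Rightarrow> real^'n^'m \<Rightarrow> real^'m^'n \<Rightarrow> real^'n^'n \<Rightarrow> real^('m + 'n)^('m + 'n)" where
  "block_mat M11 M12 M21 M22 = (\<chi> i j. case i of
      Inl a \<Rightarrow> (case j of Inl b \<Rightarrow> M11 $ a $ b | Inr b \<Rightarrow> M12 $ a $ b)
    | Inr a \<Rightarrow> (case j of Inl b \<Rightarrow> M21 $ a $ b | Inr b \<Rightarrow> M22 $ a $ b))"

definition P_MGSSP :: "real \<Rightarrow> real \<Rightarrow> real^'m^'m \<Rightarrow> real^'n^'m \<Rightarrow> real^('m + 'n)^('m + 'n)" where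
  "P_MGSSP \<alpha> \<beta> A B = block_mat (\<alpha> *\<^sub>R mat 1 + 2 *\<^sub>R A) (2 *\<^sub>R B) (- (2 *\<^sub>R transpose B)) (\<beta> *\<^sub>R mat 1)"

definition Q_MGSSP :: "real \<Rightarrow> real \<Rightarrow> real^'m^'m \<Rightarrow> real^'n^'m \<Rightarrow> real^('m + 'n)^('m + 'n)" where
  "Q_MGSSP \<alpha> \<beta> A B = block_mat (\<alpha> *\<^sub>R mat 1 + A) B (- transpose B) (\<beta> *\<^sub>R mat 1)"

definition T_MGSSP :: "real \<Rightarrow> real \<Rightarrow> real^'m^'m \<Rightarrow> real^'n^'m \<Rightarrow> real^('m + 'n)^('m + 'n)" where
  "T_MGSSP \<alpha> \<beta> A B = matrix_inv (P_MGSSP \<alpha> \<beta> A B) ** Q_MGSSP \<alpha> \<beta> A B"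

text \<open>Matrix powers (the componentwise times on vec types is not matrix product).\<close>
fun mat_pow :: "real^'k^'k \<Rightarrow> nat \<Rightarrow> real^'k^'k" where
  "mat_pow M 0 = mat 1"
| "mat_pow M (Suc k) = M ** mat_pow M k"

definition mat_index :: "real^'k^'k \<Rightarrow> nat" where
  "mat_index M = (LEAST k. rank (mat_pow M k) = rank (mat_pow M (Suc k)))"

end

theory Submission
  imports Defs
begin

definition vl :: "real^('m::finite+'n::finite) \<Rightarrow> real^'m" where "vl v = (\<chi> i. v $ Inl i)"
definition vr :: "real^('m::finite+'n::finite) \<Rightarrow> real^'n" where "vr v = (\<chi> i. v $ Inr i)"

lemma sum_UNIV_Plus: "(\<Sum>k\<in>(UNIV::('a::finite+'b::finite) set). f k) = (\<Sum>i\<in>UNIV. f (Inl i)) + (\<Sum>j\<in>UNIV. f (Inr j))"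
proof -
  have "(\<Sum>k\<in>(UNIV::('a+'b) set). f k) = (\<Sum>k\<in>(UNIV <+> UNIV). f k)" by simp
  also have "\<dots> = (\<Sum>i\<in>UNIV. f (Inl i)) + (\<Sum>j\<in>UNIV. f (Inr j))"
    by (subst sum.Plus) (auto simp: o_def)
  finally show ?thesis .
qed

lemma vl_blk: "vl (block_mat M11 M12 M21 M22 *v v) = M11 *v vl v + M12 *v vr v"
  by (simp add: vec_eq_iff vl_def vr_def block_mat_def matrix_vector_mult_def sum_UNIV_Plus)

lemma vr_blk: "vr (block_mat M11 M12 M21 M22 *v v) = M21 *v vl v + M22 *v vr v"
  by (simp add: vec_eq_iff vl_def vr_def block_mat_def matrix_vector_mult_def sum_UNIV_Plus)

lemma inner_split: "(u::real^('m::finite+'n::finite)) \<bullet> v = vl u \<bullet> vl v + vr u \<bullet> vr v"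
  by (simp add: inner_vec_def vl_def vr_def sum_UNIV_Plus)

lemma vl_diff[simp]: "vl (u - v) = vl u - vl v" and vr_diff[simp]: "vr (u - v) = vr u - vr v"
  and vl0[simp]: "vl 0 = 0" and vr0[simp]: "vr 0 = 0"
  by (simp_all add: vec_eq_iff vl_def vr_def)

lemma split_eq0: "(v::real^('m::finite+'n::finite)) = 0 \<longleftrightarrow> vl v = 0 \<and> vr v = 0"
  apply (simp add: vec_eq_iff vl_def vr_def)
  by (metis sum.exhaust)

lemma inner_transpose: "(x::real^'m::finite) \<bullet> ((B::real^'n::finite^'m) *v y) = (transpose B *v x) \<bullet> y"
  by (simp add: inner_vec_def matrix_vector_mult_def transpose_def sum_distrib_left sum_distrib_right
      mult.commute mult.left_commute sum.swap[of _ "UNIV::'m set"])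


lemma neg_mv: "(- M) *v (x::real^'a::finite) = - (M *v x)"
  by (simp add: vec_eq_iff matrix_vector_mult_def sum_negf)

lemma vl_P: "vl (P_MGSSP \<alpha> \<beta> A B *v v) = \<alpha> *\<^sub>R vl v + 2 *\<^sub>R (A *v vl v) + 2 *\<^sub>R (B *v vr v)"
  by (simp add: P_MGSSP_def vl_blk matrix_vector_mult_add_rdistrib scaleR_matrix_vector_assoc[symmetric])
lemma vr_P: "vr (P_MGSSP \<alpha> \<beta> A B *v v) = - (2 *\<^sub>R (transpose B *v vl v)) + \<beta> *\<^sub>R vr v"
  by (simp add: P_MGSSP_def vr_blk neg_mv matrix_vector_mult_add_rdistrib scaleR_matrix_vector_assoc[symmetric])
lemma vl_Q: "vl (Q_MGSSP \<alpha> \<beta> A B *v v) = \<alpha> *\<^sub>R vl v + (A *v vl v) + (B *v vr v)"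
  by (simp add: Q_MGSSP_def vl_blk matrix_vector_mult_add_rdistrib scaleR_matrix_vector_assoc[symmetric])
lemma vr_Q: "vr (Q_MGSSP \<alpha> \<beta> A B *v v) = - (transpose B *v vl v) + \<beta> *\<^sub>R vr v"
  by (simp add: Q_MGSSP_def vr_blk neg_mv matrix_vector_mult_add_rdistrib scaleR_matrix_vector_assoc[symmetric])


context
  fixes A :: "real^'m::finite^'m" and B :: "real^'n::finite^'m" and \<alpha> \<beta> :: real
  assumes pd: "pos_def_mat A" and al: "\<alpha> \<ge> 0" and be: "\<beta> > 0"
begin

lemma quadP: "v \<bullet> (P_MGSSP \<alpha> \<beta> A B *v v) = \<alpha> * (vl v \<bullet> vl v) + 2 * (vl v \<bullet> (A *v vl v)) + \<beta> * (vr v \<bullet> vr v)"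
proof -
  have t: "vr v \<bullet> (vl v v* B) = vl v \<bullet> (B *v vr v)"
    by (metis inner_transpose transpose_matrix_vector inner_commute)
  show ?thesis
    by (simp add: inner_split[of v] vl_P vr_P inner_add_right inner_diff_right t)
qed
lemma innerD: "u \<bullet> (P_MGSSP \<alpha> \<beta> A B *v v - Q_MGSSP \<alpha> \<beta> A B *v v)
   = vl u \<bullet> (A *v vl v + B *v vr v) - (B *v vr u) \<bullet> vl v"
proof -
  have t: "vr u \<bullet> (vl v v* B) = (B *v vr u) \<bullet> vl v"
    by (metis inner_transpose transpose_matrix_vector inner_commute)
  have "vr (P_MGSSP \<alpha> \<beta> A B *v v - Q_MGSSP \<alpha> \<beta> A B *v v) = - (vl v v* B)"
    by (simp add: vr_P vr_Q scaleR_2)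
  moreover have "vl (P_MGSSP \<alpha> \<beta> A B *v v - Q_MGSSP \<alpha> \<beta> A B *v v) = A *v vl v + B *v vr v"
    by (simp add: vl_P vl_Q scaleR_2)
  ultimately show ?thesis
    by (simp add: inner_split[of u] t)
qed

lemma P_inj: assumes "P_MGSSP \<alpha> \<beta> A B *v v = 0" shows "v = 0"
proof -
  have q: "\<alpha> * (vl v \<bullet> vl v) + 2 * (vl v \<bullet> (A *v vl v)) + \<beta> * (vr v \<bullet> vr v) = 0"
    using quadP[of v] assms by simp
  have a: "\<alpha> * (vl v \<bullet> vl v) \<ge> 0" using al by simp
  have c: "\<beta> * (vr v \<bullet> vr v) \<ge> 0" using be by simp
  have x: "vl v = 0"
  proof (rule ccontr)
    assume "vl v \<noteq> 0"
    then have "vl v \<bullet> (A *v vl v) > 0" using pd unfolding pos_def_mat_def by blast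
    then show False using q a c by linarith
  qed
  then have "\<beta> * (vr v \<bullet> vr v) = 0" using q by simp
  then have "vr v = 0" using be by simp
  then show ?thesis using x split_eq0 by blast
qed

lemma Dker: assumes "P_MGSSP \<alpha> \<beta> A B *v w - Q_MGSSP \<alpha> \<beta> A B *v w = 0"
  shows "vl w = 0 \<and> B *v vr w = 0"
proof -
  have "vl w \<bullet> (A *v vl w) = 0"
    using innerD[of w w] assms by (simp add: inner_add_right inner_commute)
  then have x: "vl w = 0" using pd unfolding pos_def_mat_def by force
  have "vl (P_MGSSP \<alpha> \<beta> A B *v w - Q_MGSSP \<alpha> \<beta> A B *v w) = 0" using assms by simp
  then have "B *v vr w = 0" using x by (simp add: vl_P vl_Q scaleR_2)
  with x show ?thesis by simp
qed


lemma P_invertible: "invertible (P_MGSSP \<alpha> \<beta> A B)"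
proof -
  have "\<forall>x. P_MGSSP \<alpha> \<beta> A B *v x = 0 \<longrightarrow> x = 0" using P_inj by blast
  then obtain N' where "N' ** P_MGSSP \<alpha> \<beta> A B = mat 1"
    using matrix_left_invertible_ker by blast
  then show ?thesis using invertible_left_inverse by blast
qed

lemma N_props: "P_MGSSP \<alpha> \<beta> A B ** matrix_inv (P_MGSSP \<alpha> \<beta> A B) = mat 1 \<and>
   matrix_inv (P_MGSSP \<alpha> \<beta> A B) ** P_MGSSP \<alpha> \<beta> A B = mat 1"
  using P_invertible unfolding invertible_def matrix_inv_def by (rule someI_ex)

lemma M_apply: "(mat 1 - T_MGSSP \<alpha> \<beta> A B) *v v =
   matrix_inv (P_MGSSP \<alpha> \<beta> A B) *v (P_MGSSP \<alpha> \<beta> A B *v v - Q_MGSSP \<alpha> \<beta> A B *v v)"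
proof -
  let ?N = "matrix_inv (P_MGSSP \<alpha> \<beta> A B)"
  have "v = ?N *v (P_MGSSP \<alpha> \<beta> A B *v v)"
    using N_props by (simp add: matrix_vector_mul_assoc)
  then show ?thesis
    unfolding T_MGSSP_def
    by (metis matrix_vector_mult_diff_rdistrib matrix_vector_mul_lid matrix_vector_mul_assoc
        matrix_vector_mult_diff_distrib)
qed

lemma M_ker: "(mat 1 - T_MGSSP \<alpha> \<beta> A B) *v v = 0 \<longleftrightarrow>
   P_MGSSP \<alpha> \<beta> A B *v v - Q_MGSSP \<alpha> \<beta> A B *v v = 0"
proof -
  have "\<And>u. matrix_inv (P_MGSSP \<alpha> \<beta> A B) *v u = 0 \<Longrightarrow> u = 0"
    by (metis N_props matrix_vector_mul_assoc matrix_vector_mul_lid matrix_vector_mult_0_right)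
  then show ?thesis using M_apply[of v] by (metis matrix_vector_mult_0_right)
qed

lemma MM_ker: assumes "(mat 1 - T_MGSSP \<alpha> \<beta> A B) *v ((mat 1 - T_MGSSP \<alpha> \<beta> A B) *v v) = 0"
  shows "(mat 1 - T_MGSSP \<alpha> \<beta> A B) *v v = 0"
proof -
  let ?P = "P_MGSSP \<alpha> \<beta> A B" and ?Q = "Q_MGSSP \<alpha> \<beta> A B" and ?N = "matrix_inv (P_MGSSP \<alpha> \<beta> A B)"
  define w where "w = (mat 1 - T_MGSSP \<alpha> \<beta> A B) *v v"
  have Dw: "?P *v w - ?Q *v w = 0" using assms M_ker unfolding w_def by blast
  then have w1: "vl w = 0" and Bw2: "B *v vr w = 0" using Dker by auto
  have Pw: "?P *v w = ?P *v v - ?Q *v v"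
    unfolding w_def M_apply using N_props by (simp add: matrix_vector_mul_assoc)
  have "w \<bullet> (?P *v w) = \<beta> * (vr w \<bullet> vr w)" using quadP[of w] w1 by simp
  moreover have "w \<bullet> (?P *v w) = 0"
    unfolding Pw innerD using w1 Bw2 by simp
  ultimately have "vr w = 0" using be by simp
  then have "w = 0" using w1 split_eq0 by blast
  then show ?thesis unfolding w_def .
qed
end

lemma rank_sq_eq:
  fixes M :: "real^'k::finite^'k"
  assumes ker: "\<And>v. M *v (M *v v) = 0 \<Longrightarrow> M *v v = 0"
  shows "rank (M ** M) = rank M"
proof -
  have e: "range ((*v) (M ** M)) = (*v) M ` range ((*v) M)"
    by (auto simp: matrix_vector_mul_assoc[symmetric] image_comp o_def)
  have sub: "subspace (range ((*v) M))"
    by (rule linear_subspace_image[OF matrix_vector_mul_linear subspace_UNIV])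
  have inj: "inj_on ((*v) M) (span (range ((*v) M)))"
  proof (rule inj_onI)
    fix a b assume "a \<in> span (range ((*v) M))" "b \<in> span (range ((*v) M))" and eq: "M *v a = M *v b"
    then obtain x y where "a = M *v x" "b = M *v y" using sub by (metis span_eq_iff rangeE)
    then have "a - b = M *v (x - y)" by (simp add: matrix_vector_mult_diff_distrib)
    moreover have "M *v (a - b) = 0" using eq by (simp add: matrix_vector_mult_diff_distrib)
    ultimately have "a - b = 0" using ker by metis
    then show "a = b" by simp
  qed
  have "rank (M ** M) = dim ((*v) M ` range ((*v) M))" by (simp add: rank_dim_range e)
  also have "\<dots> = dim (range ((*v) M))"
    by (rule dim_image_eq[OF matrix_vector_mul_linear inj])
  also have "\<dots> = rank M" by (simp add: rank_dim_range)
  finally show ?thesis .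
qed

theorem lemma4p2:
  fixes A :: "real^'m^'m" and B :: "real^'n^'m" and \<alpha> \<beta> :: real
  assumes "pos_def_mat A"
    and "CARD('n) \<le> CARD('m)"
    and "rank B < CARD('n)"
    and "\<alpha> \<ge> 0" and "\<beta> > 0"
  shows "mat_index (mat 1 - T_MGSSP \<alpha> \<beta> A B) = 1"
proof -
  let ?M = "mat 1 - T_MGSSP \<alpha> \<beta> A B"
  have r2: "rank (?M ** ?M) = rank ?M"
    by (rule rank_sq_eq, rule MM_ker[OF assms(1) assms(4) assms(5)])
  obtain z where z: "z \<noteq> 0" "B *v z = 0"
    using matrix_nonfull_linear_equations_eq[of B] assms(3) by auto
  define v :: "real^('m+'n)" where "v = (\<chi> k. case k of Inl i \<Rightarrow> 0 | Inr j \<Rightarrow> z $ j)"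
  have vl: "vl v = 0" and vr: "vr v = z" by (simp_all add: v_def vl_def vr_def vec_eq_iff)
  have "v \<noteq> 0" using vr z(1) split_eq0 by auto
  moreover have "?M *v v = 0"
    unfolding M_ker[OF assms(1) assms(4) assms(5)]
    by (simp add: split_eq0 vl_P vl_Q vr_P vr_Q vl vr z(2))
  ultimately have r1: "rank ?M \<noteq> CARD('m+'n)"
    using matrix_nonfull_linear_equations_eq[of ?M] by blast
  show ?thesis
    unfolding mat_index_def
  proof (rule Least_equality)
    show "rank (mat_pow ?M 1) = rank (mat_pow ?M (Suc 1))"
      using r2 by (simp add: numeral_2_eq_2)
    fix k assume "rank (mat_pow ?M k) = rank (mat_pow ?M (Suc k))"
    moreover have "rank (mat 1 :: real^('m+'n)^('m+'n)) = CARD('m+'n)" by (rule rank_I)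
    ultimately show "1 \<le> k" using r1 by (cases k) auto
  qed
qed

end
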